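(* Let $u$ be a user, let $I$ be a finite set of items, and let $s_{uq}(\theta)\in\mathbb{R}$ be the model score of item $q\in I$ for $u$ under parameters $\theta$. Rank all items by decreasing score (ties broken arbitrarily), let $r_q$ denote the position of item $q$ in this ranking, and let $R_k(u)$ be the set of the first $k$ items. Let $P(u)\subseteq I$ be a nonempty set of test positive items for $u$. Define $$\phi_u(p;\theta)=\frac{1}{1+\sum_{q\neq p}\exp\!\left(s_{uq}(\theta)-s_{up}(\theta)\right)},$$ $$\mathrm{DCG@k}(u)=\sum_{p\in P(u)\cap R_k(u)}\frac{1}{\log_2(r_p+1)},\qquad Z_k(u)=\mathrm{IDCG@k}(u)=\sum_{i=1}^{\min(k,|P(u)|)}\frac{1}{\log_2(i+1)},$$ and $\mathrm{NDCG@k}(u)=\mathrm{DCG@k}(u)/\mathrm{IDCG@k}(u)$. Then $$\mathrm{NDCG@k}(u)\ \ge\ \frac{1}{Z_k(u)}\sum_{p\in P(u)}\mathbb{I}(r_p\le k)\,\phi_u(p;\theta),$$ where $\mathbb{I}(\cdot)$ is the indicator function.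
   Context: Here $k\ge 1$ is an integer and the sum in $\phi_u$ ranges over all items $q\in I$ other than $p$. *)

theory Defs
  imports Complex_Main
begin

definition is_ranking :: "'a set \<Rightarrow> ('a \<Rightarrow> real) \<Rightarrow> ('a \<Rightarrow> nat) \<Rightarrow> bool" where
  "is_ranking I sc r \<longleftrightarrow> bij_betw r I {1..card I} \<and>
     (\<forall>p\<in>I. \<forall>q\<in>I. sc q > sc p \<longrightarrow> r q < r p)"

definition topk :: "'a set \<Rightarrow> ('a \<Rightarrow> nat) \<Rightarrow> nat \<Rightarrow> 'a set" where
  "topk I r k = {q \<in> I. r q \<le> k}"

definition phi :: "'a set \<Rightarrow> ('a \<Rightarrow> real) \<Rightarrow> 'a \<Rightarrow> real" where
  "phi I sc p = 1 / (1 + (\<Sum>q\<in>I - {p}. exp (sc q - sc p)))"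

definition DCG :: "'a set \<Rightarrow> ('a \<Rightarrow> nat) \<Rightarrow> 'a set \<Rightarrow> nat \<Rightarrow> real" where
  "DCG I r P k = (\<Sum>p\<in>P \<inter> topk I r k. 1 / log 2 (real (r p) + 1))"

definition IDCG :: "'a set \<Rightarrow> nat \<Rightarrow> real" where
  "IDCG P k = (\<Sum>i=1..min k (card P). 1 / log 2 (real i + 1))"

definition NDCG :: "'a set \<Rightarrow> ('a \<Rightarrow> nat) \<Rightarrow> 'a set \<Rightarrow> nat \<Rightarrow> real" where
  "NDCG I r P k = DCG I r P k / IDCG P k"

end

theory Submission
  imports Defs
begin

lemma log_le_self: "n \<ge> 1 \<Longrightarrow> log 2 (real n + 1) \<le> real n"
proof -
  assume n: "n \<ge> 1"
  have "real n + 1 \<le> 2 ^ n"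
  proof -
    have "n + 1 \<le> (2::nat) ^ n" using n
    proof (induction n rule: dec_induct)
      case base then show ?case by simp
    next
      case (step m) then show ?case by simp
    qed
    then show ?thesis by (metis of_nat_1 of_nat_add of_nat_le_iff of_nat_numeral of_nat_power)
  qed
  then have "log 2 (real n + 1) \<le> log 2 (2 ^ n)" by (intro log_mono) auto
  also have "\<dots> = real n" by (simp add: log_pow_cancel)
  finally show ?thesis .
qed

lemma phi_le:
  assumes fin: "finite I" and rk: "is_ranking I sc r" and p: "p \<in> I"
  shows "phi I sc p \<le> 1 / real (r p)"
proof -
  have bij: "bij_betw r I {1..card I}" and mono: "\<forall>p\<in>I. \<forall>q\<in>I. sc q > sc p \<longrightarrow> r q < r p"
    using rk unfolding is_ranking_def by auto
  define A where "A = {q\<in>I. r q < r p}"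
  have rp: "r p \<in> {1..card I}" using bij p by (auto dest: bij_betw_apply)
  have "bij_betw r A {1..<r p}"
  proof -
    have inj: "inj_on r A" using bij unfolding A_def bij_betw_def by (auto intro: inj_on_subset)
    have "r ` A = {1..<r p}"
    proof
      show "r ` A \<subseteq> {1..<r p}" using bij unfolding A_def bij_betw_def by auto
      show "{1..<r p} \<subseteq> r ` A"
      proof
        fix i assume i: "i \<in> {1..<r p}"
        then have "i \<in> {1..card I}" using rp by auto
        then obtain q where "q \<in> I" "r q = i" using bij unfolding bij_betw_def by (metis imageE)
        then show "i \<in> r ` A" using i unfolding A_def by auto
      qed
    qed
    then show ?thesis using inj by (simp add: bij_betw_def)
  qed
  then have cA: "card A = r p - 1" by (simp add: bij_betw_same_card)
  have Asub: "A \<subseteq> I - {p}" unfolding A_def by auto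
  have ge: "\<And>q. q \<in> A \<Longrightarrow> sc q \<ge> sc p" using mono p unfolding A_def by force
  have "real (r p - 1) = (\<Sum>q\<in>A. 1)" using cA by simp
  also have "\<dots> \<le> (\<Sum>q\<in>A. exp (sc q - sc p))"
    by (rule sum_mono) (use ge in auto)
  also have "\<dots> \<le> (\<Sum>q\<in>I - {p}. exp (sc q - sc p))"
    by (rule sum_mono2) (use fin Asub in auto)
  finally have S: "real (r p - 1) \<le> (\<Sum>q\<in>I - {p}. exp (sc q - sc p))" .
  have r1: "r p \<ge> 1" using rp by auto
  then have "real (r p) \<le> 1 + (\<Sum>q\<in>I - {p}. exp (sc q - sc p))" using S by (simp add: of_nat_diff)
  then show ?thesis unfolding phi_def using r1
    by (intro divide_left_mono) auto
qed

theorem corollary2: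
  fixes I :: "'a set" and P :: "'a set" and u :: 'u and \<theta> :: 'p
    and s :: "'u \<Rightarrow> 'a \<Rightarrow> 'p \<Rightarrow> real" and r :: "'a \<Rightarrow> nat" and k :: nat
  assumes "finite I"
    and "k \<ge> 1"
    and "is_ranking I (\<lambda>q. s u q \<theta>) r"
    and "P \<subseteq> I" and "P \<noteq> {}"
  shows "NDCG I r P k \<ge>
    (1 / IDCG P k) * (\<Sum>p\<in>P. (if r p \<le> k then 1 else 0) * phi I (\<lambda>q. s u q \<theta>) p)"
proof -
  let ?sc = "\<lambda>q. s u q \<theta>"
  have finP: "finite P" using assms(1,4) finite_subset by blast
  have cP: "card P \<ge> 1" using finP assms(5) by (simp add: Suc_le_eq card_gt_0_iff)
  have Ipos: "IDCG P k > 0"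
  proof -
    have m: "min k (card P) \<ge> 1" using cP assms(2) by simp
    have "IDCG P k \<ge> (\<Sum>i\<in>{1::nat}. 1 / log 2 (real i + 1))" unfolding IDCG_def
      by (rule sum_mono2) (use m in auto)
    then show ?thesis by simp
  qed
  have rpos: "\<And>p. p \<in> I \<Longrightarrow> r p \<ge> 1"
    using assms(3) unfolding is_ranking_def bij_betw_def by force
  have "(\<Sum>p\<in>P. (if r p \<le> k then 1 else 0) * phi I ?sc p) = (\<Sum>p\<in>P \<inter> topk I r k. phi I ?sc p)"
    using finP assms(4) unfolding topk_def
    by (simp add: sum.inter_filter[symmetric] if_distrib Int_def) (rule sum.mono_neutral_cong_right; auto)
  also have "\<dots> \<le> DCG I r P k" unfolding DCG_def
  proof (rule sum_mono)
    fix p assume p: "p \<in> P \<inter> topk I r k"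
    then have pI: "p \<in> I" unfolding topk_def by auto
    have "phi I ?sc p \<le> 1 / real (r p)" by (rule phi_le[OF assms(1) assms(3) pI])
    also have "\<dots> \<le> 1 / log 2 (real (r p) + 1)"
      using log_le_self[OF rpos[OF pI]] rpos[OF pI]
      by (intro divide_left_mono) auto
    finally show "phi I ?sc p \<le> 1 / log 2 (real (r p) + 1)" .
  qed
  finally have "(\<Sum>p\<in>P. (if r p \<le> k then 1 else 0) * phi I ?sc p) \<le> DCG I r P k" .
  then show ?thesis unfolding NDCG_def using Ipos
    by (simp add: divide_right_mono)
qed

end
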